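(* For every $\alpha\in[0,1]$ there exists a set $G_\alpha\subset[1,2]$ such that $\dim_{\mathrm M}G_\alpha=0$ and $\dim_{\mathrm A}G_\alpha=\alpha$.
   Context: $N(E,\delta)$ is the minimal number of intervals of length $\delta$ covering $E$. $\dim_{\mathrm M}E=\inf\{a>0:\exists c>0\ \forall\delta\in(0,1),\ N(E,\delta)\le c\delta^{-a}\}$. $\dim_{\mathrm A}E=\inf\{a>0:\exists c>0\text{ such that for all subintervals }I\subset[1,2]\text{ and all }\delta\in(0,|I|),\ N(E\cap I,\delta)\le c\delta^{-a}|I|^a\}$. *)

theory Defs
  imports Complex_Main
begin

definition cover_num :: "real set \<Rightarrow> real \<Rightarrow> nat" where
  "cover_num E \<delta> = (LEAST n. \<exists>S. finite S \<and> card S = n \<and> E \<subseteq> (\<Union>x\<in>S. {x..x+\<delta>}))"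

definition dim_M :: "real set \<Rightarrow> real" where
  "dim_M E = Inf {a. a > 0 \<and> (\<exists>c>0. \<forall>\<delta>. 0 < \<delta> \<and> \<delta> < 1 \<longrightarrow>
       real (cover_num E \<delta>) \<le> c * \<delta> powr (-a))}"

definition dim_A :: "real set \<Rightarrow> real" where
  "dim_A E = Inf {a. a > 0 \<and> (\<exists>c>0. \<forall>u v \<delta>. 1 \<le> u \<and> u < v \<and> v \<le> 2 \<and> 0 < \<delta> \<and> \<delta> < v - u \<longrightarrow>
       real (cover_num (E \<inter> {u..v}) \<delta>) \<le> c * \<delta> powr (-a) * (v - u) powr a)}"

end

theory Submission
  imports Defs
begin


fun T :: "real \<Rightarrow> nat \<Rightarrow> nat \<Rightarrow> nat set" where
  "T a m 0 = {0}"
| "T a m (Suc n) = (if n < m then {0} else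
     if \<lfloor>real n * a\<rfloor> < \<lfloor>real (Suc n) * a\<rfloor> then T a m n \<union> (\<lambda>z. 2^n + z) ` T a m n else T a m n)"

lemma T_small: "n \<le> m \<Longrightarrow> T a m n = {0}"
  by (induction n) auto

lemma T_fin: "finite (T a m n)"
  by (induction n) auto

lemma T_bound: "z \<in> T a m n \<Longrightarrow> z < 2^n"
proof (induction n arbitrary: z)
  case 0 then show ?case by simp
next
  case (Suc n)
  have h: "(2::nat)^n < 2^Suc n" by simp
  have "z = 0 \<or> z \<in> T a m n \<or> (\<exists>z'\<in>T a m n. z = 2^n+z')" using Suc.prems by (auto split: if_splits)
  then show ?case
  proof (elim disjE bexE)
    assume "z \<in> T a m n" then show ?thesis using Suc.IH h by (meson less_trans)
  next
    fix z' assume "z' \<in> T a m n" "z = 2^n+z'" then show ?thesis using Suc.IH[of z'] by simp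
  qed simp
qed

lemma T_dvd: "z \<in> T a m n \<Longrightarrow> (2::nat)^m dvd z"
proof (induction n arbitrary: z)
  case 0 then show ?case by simp
next
  case (Suc n)
  show ?case
  proof (cases "n < m")
    case True then show ?thesis using Suc by simp
  next
    case False
    then have "(2::nat)^m dvd 2^n" by (simp add: le_imp_power_dvd)
    then show ?thesis using Suc False by (auto split: if_splits)
  qed
qed

lemma floor_step:
  assumes "0 \<le> a" "a \<le> 1"
  shows "\<lfloor>real n * a\<rfloor> \<le> \<lfloor>real (Suc n) * a\<rfloor> \<and> \<lfloor>real (Suc n) * a\<rfloor> \<le> \<lfloor>real n * a\<rfloor> + 1"
proof -
  have "real n * a \<le> real (Suc n) * a" using assms by (simp add: mult_right_mono)
  moreover have "real (Suc n) * a \<le> real n * a + 1" using assms by (simp add: algebra_simps)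
  ultimately show ?thesis
    by (metis floor_add_int floor_mono of_int_1)
qed

lemma floor_mono_nat:
  assumes "0 \<le> a" "m \<le> n"
  shows "\<lfloor>real m * a\<rfloor> \<le> \<lfloor>real n * a\<rfloor>"
  using assms by (intro floor_mono mult_right_mono) auto

lemma T_card:
  assumes "0 \<le> a" "a \<le> 1" "m \<le> n"
  shows "card (T a m n) = 2 ^ nat (\<lfloor>real n * a\<rfloor> - \<lfloor>real m * a\<rfloor>)"
  using assms(3)
proof (induction n)
  case 0 then show ?case by simp
next
  case (Suc n)
  show ?case
  proof (cases "Suc n = m")
    case True then show ?thesis using T_small[of "Suc n" m a] by simp
  next
    case False
    then have mn: "m \<le> n" "\<not> n < m" using Suc by auto
    have IH: "card (T a m n) = 2 ^ nat (\<lfloor>real n * a\<rfloor> - \<lfloor>real m * a\<rfloor>)" using Suc mn by auto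
    have fm: "\<lfloor>real m * a\<rfloor> \<le> \<lfloor>real n * a\<rfloor>" using floor_mono_nat[OF assms(1) mn(1)] .
    have fs: "\<lfloor>real n * a\<rfloor> \<le> \<lfloor>real (Suc n) * a\<rfloor> \<and> \<lfloor>real (Suc n) * a\<rfloor> \<le> \<lfloor>real n * a\<rfloor> + 1"
      using floor_step[OF assms(1,2)] .
    show ?thesis
    proof (cases "\<lfloor>real n * a\<rfloor> < \<lfloor>real (Suc n) * a\<rfloor>")
      case True
      have eq: "\<lfloor>real (Suc n) * a\<rfloor> = \<lfloor>real n * a\<rfloor> + 1" using True fs by linarith
      have disj: "T a m n \<inter> (\<lambda>z. 2^n + z) ` T a m n = {}" using T_bound by fastforce
      have "card (T a m (Suc n)) = card (T a m n) + card ((\<lambda>z. 2^n + z) ` T a m n)"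
        using True mn disj by (simp add: card_Un_disjoint T_fin del: of_nat_Suc)
      also have "\<dots> = 2 * card (T a m n)" by (simp add: card_image)
      moreover have "nat (\<lfloor>real (Suc n) * a\<rfloor> - \<lfloor>real m * a\<rfloor>) = Suc (nat (\<lfloor>real n * a\<rfloor> - \<lfloor>real m * a\<rfloor>))"
        using eq fm by (simp del: of_nat_Suc)
      ultimately show ?thesis using IH by (simp del: of_nat_Suc)
    next
      case False
      then have eq: "\<lfloor>real (Suc n) * a\<rfloor> = \<lfloor>real n * a\<rfloor>" using fs by linarith
      show ?thesis using IH eq mn False by (simp del: of_nat_Suc)
    qed
  qed
qed

lemma T_split:
  assumes "l \<le> m" "m \<le> n"
  shows "T a l n = (\<lambda>(y,z). y+z) ` (T a l m \<times> T a m n)"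
  using assms(2)
proof (induction n)
  case 0 then show ?case using assms by (auto simp: T_small)
next
  case (Suc n)
  show ?case
  proof (cases "Suc n = m")
    case True then show ?thesis by (auto simp: T_small image_iff)
  next
    case False
    then have mn: "m \<le> n" "\<not> n < m" "\<not> n < l" using Suc assms by auto
    have IH: "T a l n = (\<lambda>(y,z). y+z) ` (T a l m \<times> T a m n)" using Suc mn by auto
    show ?thesis
    proof (cases "\<lfloor>real n * a\<rfloor> < \<lfloor>real (Suc n) * a\<rfloor>")
      case True
      have "T a l (Suc n) = T a l n \<union> (\<lambda>z. 2^n + z) ` T a l n" using True mn by (simp del: of_nat_Suc)
      moreover have "T a m (Suc n) = T a m n \<union> (\<lambda>z. 2^n + z) ` T a m n" using True mn by (simp del: of_nat_Suc)
      moreover have "(\<lambda>(y,z). y+z) ` (A \<times> ((+) c ` B)) = (+) c ` ((\<lambda>(y,z). y+z) ` (A \<times> B))" for A B and c :: nat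
        by (auto simp: image_iff) (metis add.left_commute)+
      ultimately show ?thesis using IH by (simp add: Sigma_Un_distrib2 image_Un del: of_nat_Suc)
    next
      case False
      then show ?thesis using IH mn by (simp del: of_nat_Suc)
    qed
  qed
qed

lemma card_H:
  fixes w :: real
  assumes "\<forall>h\<in>H. (2::nat)^p dvd h \<and> w - 2^p < real h \<and> real h \<le> w + 2^p"
  shows "card H \<le> 2"
proof -
  define f where "f = \<lfloor>w / 2^p\<rfloor>"
  define g where "g = (\<lambda>h::nat. int (h div 2^p))"
  have inj: "inj_on g H"
  proof
    fix x y assume "x \<in> H" "y \<in> H" "g x = g y"
    then have "x div 2^p = y div 2^p" by (simp add: g_def)
    moreover have "x = 2^p * (x div 2^p)" "y = 2^p * (y div 2^p)" using assms \<open>x \<in> H\<close> \<open>y \<in> H\<close> by auto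
    ultimately show "x = y" by metis
  qed
  have img: "g ` H \<subseteq> {f, f+1}"
  proof
    fix k assume "k \<in> g ` H"
    then obtain h where h: "h \<in> H" "k = g h" by auto
    define q where "q = h div 2^p"
    have hq: "h = 2^p * q" using assms h(1) unfolding q_def by auto
    have rh: "real h = 2^p * real q" using hq by simp
    have pos: "(0::real) < 2^p" by simp
    have "w - 2^p < 2^p * real q" "2^p * real q \<le> w + 2^p" using assms h(1) rh by auto
    then have "w / 2^p - 1 < real q" "real q \<le> w / 2^p + 1" using pos by (simp_all add: field_simps)
    moreover have "real_of_int f \<le> w / 2^p" "w / 2^p < real_of_int f + 1" unfolding f_def by linarith+
    ultimately have "f \<le> int q" "int q \<le> f + 1" by linarith+
    then show "k \<in> {f, f+1}" using h(2) unfolding g_def q_def by auto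
  qed
  have "card H = card (g ` H)" using inj by (simp add: card_image)
  also have "\<dots> \<le> card {f, f+1}" by (rule card_mono) (simp, fact img)
  also have "\<dots> \<le> 2" by simp
  finally show ?thesis .
qed

lemma T_window:
  fixes w :: real
  assumes "0 \<le> a" "a \<le> 1" "m \<le> n" "m \<le> p"
  shows "card {z \<in> T a m n. w \<le> real z \<and> real z \<le> w + 2^p} \<le> 2 * 2 ^ nat (\<lfloor>real p * a\<rfloor> - \<lfloor>real m * a\<rfloor>)"
proof (cases "n \<le> p")
  case True
  have "card {z \<in> T a m n. w \<le> real z \<and> real z \<le> w + 2^p} \<le> card (T a m n)"
    by (rule card_mono) (auto simp: T_fin)
  also have "\<dots> = 2 ^ nat (\<lfloor>real n * a\<rfloor> - \<lfloor>real m * a\<rfloor>)" using T_card assms by simp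
  also have "\<dots> \<le> 2 ^ nat (\<lfloor>real p * a\<rfloor> - \<lfloor>real m * a\<rfloor>)"
    using floor_mono_nat[OF assms(1) True] by (intro power_increasing) auto
  finally show ?thesis by simp
next
  case False
  define H where "H = {h \<in> T a p n. w - 2^p < real h \<and> real h \<le> w + 2^p}"
  have sub: "{z \<in> T a m n. w \<le> real z \<and> real z \<le> w + 2^p} \<subseteq> (\<lambda>(y,z). y+z) ` (T a m p \<times> H)"
  proof
    fix x assume x: "x \<in> {z \<in> T a m n. w \<le> real z \<and> real z \<le> w + 2^p}"
    then have "x \<in> (\<lambda>(y,z). y+z) ` (T a m p \<times> T a p n)" using T_split[of m p n a] assms False by auto
    then obtain y h where yh: "y \<in> T a m p" "h \<in> T a p n" "x = y + h" by auto
    have "y < 2^p" using T_bound yh(1) by blast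
    then have "real y < 2^p" by (metis of_nat_less_numeral_power_cancel_iff)
    moreover have "w \<le> real y + real h" using x yh by simp
    ultimately have "w - 2^p < real h" by linarith
    then have "h \<in> H" using x yh unfolding H_def by auto
    then show "x \<in> (\<lambda>(y,z). y+z) ` (T a m p \<times> H)" using yh by force
  qed
  have finH: "finite H" unfolding H_def using T_fin by auto
  have cH: "card H \<le> 2" by (rule card_H[of H p w]) (auto simp: H_def T_dvd)
  have "card {z \<in> T a m n. w \<le> real z \<and> real z \<le> w + 2^p} \<le> card ((\<lambda>(y,z). y+z) ` (T a m p \<times> H))"
    by (rule card_mono[OF _ sub]) (simp add: T_fin finH)
  also have "\<dots> \<le> card (T a m p \<times> H)" by (rule card_image_le) (simp add: T_fin finH)
  also have "\<dots> = card (T a m p) * card H" by (simp add: card_cartesian_product)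
  also have "\<dots> \<le> card (T a m p) * 2" using cH by simp
  also have "\<dots> = 2 * 2 ^ nat (\<lfloor>real p * a\<rfloor> - \<lfloor>real m * a\<rfloor>)" using T_card assms by simp
  finally show ?thesis .
qed



lemma exp_bound:
  fixes R d :: real
  assumes "0 \<le> a" "a \<le> 1" "m \<le> p" "(2::real)^p * d \<le> 8*R*2^m" "d > 0" "R > 0"
  shows "2 * real (2 ^ nat (\<lfloor>real p * a\<rfloor> - \<lfloor>real m * a\<rfloor>) :: nat) \<le> 32 * (R/d) powr a"
proof -
  define k where "k = nat (\<lfloor>real p * a\<rfloor> - \<lfloor>real m * a\<rfloor>)"
  have fm: "\<lfloor>real m * a\<rfloor> \<le> \<lfloor>real p * a\<rfloor>" using floor_mono_nat assms by auto
  have "real k = real_of_int (\<lfloor>real p * a\<rfloor> - \<lfloor>real m * a\<rfloor>)" using fm k_def by simp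
  also have "\<dots> \<le> (real p - real m) * a + 1" by (simp add: algebra_simps) linarith
  finally have kb: "real k \<le> (real p - real m) * a + 1" .
  have "real (2^k :: nat) = 2 powr real k" by (simp add: powr_realpow)
  also have "\<dots> \<le> 2 powr ((real p - real m) * a + 1)" using kb by (intro powr_mono) auto
  also have "\<dots> = 2 * (2 powr (real p - real m)) powr a" by (simp add: powr_add powr_powr mult.commute)
  also have "2 powr (real p - real m) = 2^p / 2^m" by (simp add: powr_diff powr_realpow)
  also have "(2::real)^p / 2^m \<le> 8 * (R/d)" using assms(4,5) by (simp add: field_simps)
  then have "((2::real)^p / 2^m) powr a \<le> (8 * (R/d)) powr a" using assms by (intro powr_mono2) auto
  also have "(8 * (R/d)) powr a = 8 powr a * (R/d) powr a" using assms by (subst powr_mult) auto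
  also have "8 powr a \<le> (8::real) powr 1" using assms by (intro powr_mono) auto
  then have "8 powr a * (R/d) powr a \<le> 8 * (R/d) powr a" by (simp add: mult_right_mono)
  finally show ?thesis unfolding k_def[symmetric] by linarith
qed

definition cov :: "real set \<Rightarrow> real \<Rightarrow> real set \<Rightarrow> bool" where
  "cov A d S \<longleftrightarrow> finite S \<and> A \<subseteq> (\<Union>x\<in>S. {x..x+d})"

lemma cover_num_le: "cov A d S \<Longrightarrow> cover_num A d \<le> card S"
  unfolding cover_num_def cov_def by (rule Least_le) blast

lemma cover_num_ge:
  assumes "cov A d S0" "\<And>S. cov A d S \<Longrightarrow> n \<le> card S"
  shows "n \<le> cover_num A d"
proof -
  let ?P = "\<lambda>n. \<exists>S. finite S \<and> card S = n \<and> A \<subseteq> (\<Union>x\<in>S. {x..x+d})"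
  have "?P (card S0)" using assms(1) unfolding cov_def by blast
  then have "?P (LEAST n. ?P n)" by (rule LeastI)
  then obtain S where "finite S" "card S = (LEAST n. ?P n)" "A \<subseteq> (\<Union>x\<in>S. {x..x+d})" by blast
  then show ?thesis using assms(2)[of S] unfolding cov_def cover_num_def by auto
qed

lemma cov_mono: "cov B d S \<Longrightarrow> A \<subseteq> B \<Longrightarrow> cov A d S"
  unfolding cov_def by blast

lemma nat_lt_pow_real: "x < (2::nat)^k \<Longrightarrow> real x + 1 \<le> 2^k"
proof -
  assume "x < (2::nat)^k"
  then have "x+1 \<le> 2^k" by simp
  then have "real (x+1) \<le> real ((2::nat)^k)" by (simp only: of_nat_le_iff)
  then show ?thesis by simp
qed

lemma log2_bracket:
  fixes x :: real
  assumes "1 \<le> x"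
  shows "\<exists>m::nat. 2^m \<le> x \<and> x < 2^(m+1)"
proof -
  have "nat \<lfloor>x\<rfloor> \<ge> 1" using assms by linarith
  from ex_power_ivl1[of 2, OF _ this] obtain m where m: "2^m \<le> nat \<lfloor>x\<rfloor>" "nat \<lfloor>x\<rfloor> < 2^(m+1)" by auto
  have "real (2^m) \<le> real (nat \<lfloor>x\<rfloor>)" using m(1) by (simp only: of_nat_le_iff)
  then have A: "(2::real)^m \<le> real (nat \<lfloor>x\<rfloor>)" by simp
  have "real (nat \<lfloor>x\<rfloor>) + 1 \<le> 2^(m+1)" using nat_lt_pow_real[OF m(2)] .
  moreover have "real (nat \<lfloor>x\<rfloor>) \<le> x" using assms by linarith
  moreover have "x < real (nat \<lfloor>x\<rfloor>) + 1" using assms by linarith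
  ultimately show ?thesis using A by (intro exI[of _ m]) linarith
qed

definition P :: "real \<Rightarrow> real \<Rightarrow> real \<Rightarrow> nat \<Rightarrow> real set" where
  "P a t e n = (\<lambda>x. t + e * real x) ` T a 0 n"

lemma piece_cov:
  assumes a: "0 \<le> a" "a \<le> 1" and e: "e > 0" and uv: "u < v" "0 < d" "d < v - u"
  shows "\<exists>S. cov (P a t e n \<inter> {u..v}) d S \<and> real (card S) \<le> 32 * ((v-u)/d) powr a"
proof -
  define R where "R = v - u"
  have R: "R > 0" "d < R" using uv R_def by auto
  have one: "1 \<le> (R/d) powr a" using R uv a by (intro ge_one_powr_ge_zero) auto
  obtain m :: nat where m: "2^m \<le> d/e + 1" "d/e + 1 < 2^(m+1)"
    using log2_bracket[of "d/e+1"] uv e by auto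
  have m1: "e * 2^m \<le> d + e" using m(1) e by (simp add: field_simps)
  have m2: "d < e * 2 * 2^m" using m(2) e by (simp add: field_simps)
  show ?thesis
  proof (cases "n \<le> m")
    case True
    have "cov (P a t e n \<inter> {u..v}) d {t}"
      unfolding cov_def
    proof (intro conjI subsetI)
      fix y assume "y \<in> P a t e n \<inter> {u..v}"
      then obtain x where x: "x \<in> T a 0 n" "y = t + e * real x" unfolding P_def by auto
      have "x < 2^n" using T_bound x(1) by blast
      also have "(2::nat)^n \<le> 2^m" using True by (simp add: power_increasing)
      finally have "real x + 1 \<le> 2^m" by (rule nat_lt_pow_real)
      then have "e * (real x + 1) \<le> e * 2^m" using e by (intro mult_left_mono) auto
      then have "e * real x \<le> d" using m1 by (simp add: algebra_simps)
      then show "y \<in> (\<Union>x\<in>{t}. {x..x+d})" using x e by auto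
    qed simp
    then show ?thesis using one by (intro exI[of _ "{t}"]) (simp add: R_def)
  next
    case False
    then have mn: "m \<le> n" by simp
    obtain p :: nat where p1: "2*R \<le> e * 2^p" and p2: "p = 0 \<or> e * 2^p \<le> 4*R"
    proof (cases "2*R/e < 1")
      case True then show ?thesis using that[of 0] e by (simp add: field_simps)
    next
      case False
      then obtain q :: nat where q: "2^q \<le> 2*R/e" "2*R/e < 2^(q+1)" using log2_bracket[of "2*R/e"] by auto
      show ?thesis using that[of "q+1"] q e by (simp add: field_simps)
    qed
    have mp: "m \<le> p"
    proof (rule ccontr)
      assume "\<not> m \<le> p"
      then have "(2::real)^(p+1) \<le> 2^m" by (intro power_increasing) auto
      then have "2 * 2^p \<le> (2::real)^m" by simp
      then have "e * 2 * 2^p \<le> e * 2^m" using e by simp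
      then have "3 * R < e" using m1 p1 R by (simp add: algebra_simps)
      then have "e * 2^m < 2 * e" using m1 R by linarith
      then have "(2::real)^m < 2^1" using e by simp
      then have "m = 0" by (metis power_strict_increasing_iff one_less_numeral_iff semiring_norm(76) less_one)
      then show False using \<open>\<not> m \<le> p\<close> by simp
    qed
    define w where "w = (u - t)/e - 2^m + 1"
    have ew: "e * w = u - t - e * 2^m + e" using e unfolding w_def by (simp add: field_simps)
    define Z where "Z = {z \<in> T a m n. w \<le> real z \<and> real z \<le> w + 2^p}"
    define S where "S = (\<lambda>z. t + e * real z) ` Z"
    have finZ: "finite Z" unfolding Z_def using T_fin by auto
    have covS: "cov (P a t e n \<inter> {u..v}) d S"
      unfolding cov_def
    proof (intro conjI subsetI)
      show "finite S" unfolding S_def using finZ by simp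
      fix pt assume "pt \<in> P a t e n \<inter> {u..v}"
      then obtain x where x: "x \<in> T a 0 n" "pt = t + e * real x" "u \<le> pt" "pt \<le> v" unfolding P_def by auto
      then have "x \<in> (\<lambda>(y,z). y+z) ` (T a 0 m \<times> T a m n)" using T_split[of 0 m n a] mn by auto
      then obtain y z where yz: "y \<in> T a 0 m" "z \<in> T a m n" "x = y + z" by auto
      have "y < 2^m" using T_bound yz(1) by blast
      then have "real y + 1 \<le> 2^m" by (rule nat_lt_pow_real)
      then have "e * (real y + 1) \<le> e * 2^m" using e by (intro mult_left_mono) auto
      then have ey: "e * real y + e \<le> e * 2^m" by (simp add: algebra_simps)
      have ey0: "0 \<le> e * real y" using e by simp
      have ex: "pt = t + e * real y + e * real z" using x yz by (simp add: algebra_simps)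
      have "e * w \<le> e * real z" using ew ex x(3) ey by linarith
      then have z1: "w \<le> real z" using e by simp
      have "e * 2^m \<le> d + e" by (fact m1)
      have "e * real z \<le> e * w + e * 2^p" using ew ex x(4) ey0 m1 p1 R R_def by linarith
      then have "e * real z \<le> e * (w + 2^p)" by (simp add: algebra_simps)
      then have z2: "real z \<le> w + 2^p" using e by simp
      have "z \<in> Z" unfolding Z_def using yz z1 z2 by auto
      moreover have "pt \<in> {t + e * real z .. t + e * real z + d}" using ex ey ey0 m1 by auto
      ultimately show "pt \<in> (\<Union>x\<in>S. {x..x+d})" unfolding S_def by auto
    qed
    have "card S \<le> card Z" unfolding S_def using finZ by (rule card_image_le)
    also have "card Z \<le> 2 * 2 ^ nat (\<lfloor>real p * a\<rfloor> - \<lfloor>real m * a\<rfloor>)"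
      unfolding Z_def using T_window[OF a mn mp] .
    finally have cS: "real (card S) \<le> 2 * real (2 ^ nat (\<lfloor>real p * a\<rfloor> - \<lfloor>real m * a\<rfloor>) :: nat)" by linarith
    have ratio: "(2::real)^p * d \<le> 8*R*2^m"
    proof (cases "p = 0")
      case True then have "m = 0" using mp by simp
      then show ?thesis using True R by simp
    next
      case False
      then have "e * 2^p \<le> 4*R" using p2 by simp
      then have "e * 2^p * d \<le> 4*R*d" using uv by (simp add: mult_right_mono)
      also have "4*R*d \<le> 4*R*(e*2*2^m)" using m2 R by (intro mult_left_mono) auto
      finally have "e * (2^p * d) \<le> e * (8*R*2^m)" by (simp add: algebra_simps)
      then show ?thesis using e by simp
    qed
    have "real (card S) \<le> 32 * (R/d) powr a"
      using cS exp_bound[OF a mp ratio uv(2) R(1)] by linarith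
    then show ?thesis using covS R_def by blast
  qed
qed



lemma sep_lower:
  assumes "finite A" "\<forall>x\<in>A. \<forall>y\<in>A. x \<noteq> y \<longrightarrow> d < \<bar>x - y\<bar>" "cov A d S"
  shows "card A \<le> card S"
proof -
  have ex: "\<forall>x\<in>A. \<exists>s\<in>S. x \<in> {s..s+d}" using assms(3) unfolding cov_def by blast
  define f where "f x = (SOME s. s \<in> S \<and> x \<in> {s..s+d})" for x
  have f: "f x \<in> S \<and> x \<in> {f x..f x+d}" if "x \<in> A" for x
    unfolding f_def by (rule someI_ex) (use ex that in blast)
  have "inj_on f A"
  proof
    fix x y assume xy: "x \<in> A" "y \<in> A" "f x = f y"
    show "x = y"
    proof (rule ccontr)
      assume "x \<noteq> y"
      then have "d < \<bar>x - y\<bar>" using assms(2) xy by blast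
      moreover have "x \<in> {f x..f x+d}" "y \<in> {f x..f x+d}" using f[OF xy(1)] f[OF xy(2)] xy(3) by auto
      ultimately show False by auto
    qed
  qed
  moreover have "f ` A \<subseteq> S" using f by auto
  ultimately show ?thesis using assms(3) unfolding cov_def by (meson card_inj_on_le)
qed

lemma cov_exists:
  assumes "A \<subseteq> {lo..hi}" "d > 0"
  shows "\<exists>S. cov A d S"
proof -
  define S where "S = (\<lambda>i::nat. lo + real i * d) ` {..nat \<lceil>(hi-lo)/d\<rceil>}"
  have "cov A d S" unfolding cov_def
  proof (intro conjI subsetI)
    show "finite S" unfolding S_def by simp
    fix x assume x: "x \<in> A"
    then have xr: "lo \<le> x" "x \<le> hi" using assms by auto
    define i where "i = nat \<lfloor>(x-lo)/d\<rfloor>"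
    have q0: "0 \<le> (x-lo)/d" using xr assms by simp
    have ri: "real i = of_int \<lfloor>(x-lo)/d\<rfloor>" unfolding i_def using q0 by simp
    have "real i \<le> (x-lo)/d" "(x-lo)/d < real i + 1" using ri by linarith+
    then have i1: "lo + real i * d \<le> x" "x \<le> lo + real i * d + d" using assms(2) by (simp_all add: field_simps)
    have "(x-lo)/d \<le> (hi-lo)/d" using xr assms by (simp add: divide_right_mono)
    then have "i \<le> nat \<lceil>(hi-lo)/d\<rceil>" unfolding i_def by (meson floor_le_ceiling floor_mono le_nat_iff nat_mono order_trans le_of_int_ceiling)
    then show "x \<in> (\<Union>x\<in>S. {x..x+d})" unfolding S_def using i1 by auto
  qed
  then show ?thesis by blast
qed

lemma Inf_eq:
  fixes S :: "real set"
  assumes "\<And>a. a > \<alpha> \<Longrightarrow> a \<in> S" "\<And>a. a \<in> S \<Longrightarrow> \<alpha> \<le> a"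
  shows "Inf S = \<alpha>"
proof (rule antisym)
  have ne: "S \<noteq> {}" using assms(1)[of "\<alpha>+1"] by auto
  show "\<alpha> \<le> Inf S" using ne assms(2) by (intro cInf_greatest) auto
  show "Inf S \<le> \<alpha>"
  proof (rule ccontr)
    assume "\<not> Inf S \<le> \<alpha>"
    then have "(\<alpha> + Inf S)/2 \<in> S" by (intro assms(1)) auto
    then have "Inf S \<le> (\<alpha> + Inf S)/2" by (intro cInf_lower) (auto intro: bdd_belowI assms(2))
    then show False using \<open>\<not> Inf S \<le> \<alpha>\<close> by (simp add: field_simps)
  qed
qed

lemma powr_conv:
  fixes c d R a :: real
  assumes "d > 0" "R > 0" shows "c * d powr (-a) * R powr a = c * (R/d) powr a"
proof -
  have "(R/d) powr a = R powr a / d powr a" by (rule powr_divide)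
  moreover have "d powr (-a) = 1 / d powr a" by (rule powr_minus_divide)
  ultimately show ?thesis by simp
qed

definition sk :: "nat \<Rightarrow> real" where "sk k = (1/2)^(k+1)"
definition ek :: "nat \<Rightarrow> real" where "ek k = (1/2)^(k + 2^(k+3))"
definition Q :: "real \<Rightarrow> nat \<Rightarrow> real set" where "Q a k = P a (1 + sk k) (ek k) k"
definition GG :: "real \<Rightarrow> real set" where "GG a = (\<Union>k. Q a k)"

lemma ek_pos: "ek k > 0" unfolding ek_def by simp
lemma sk_pos: "sk k > 0" unfolding sk_def by simp
lemma sk_le: "sk k \<le> 1/2" unfolding sk_def by (simp add: power_le_one)

lemma sig_eq: "ek k * 2^k = (1/2)^(2^(k+3))"
  unfolding ek_def by (simp add: power_add power_one_over)

lemma sig_le: "ek k * 2^k \<le> sk k / 4"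
proof -
  have "k+3 \<le> 2^(k+3)" using less_exp[of "k+3"] by simp
  then have "(1/2::real)^(2^(k+3)) \<le> (1/2)^(k+3)" by (intro power_decreasing) auto
  moreover have "(1/2::real)^(k+3) = (1/2)^(k+1) / 4" by (simp add: power_add eval_nat_numeral)
  ultimately show ?thesis unfolding sig_eq sk_def by simp
qed

lemma Q_range:
  assumes "x \<in> Q a k"
  shows "1 + sk k \<le> x \<and> x < 1 + sk k + ek k * 2^k"
proof -
  obtain n where n: "n \<in> T a 0 k" "x = 1 + sk k + ek k * real n" using assms unfolding Q_def P_def by auto
  have "n < 2^k" using T_bound n(1) by blast
  then have "real n < 2^k" by (metis of_nat_less_numeral_power_cancel_iff)
  then have "ek k * real n < ek k * 2^k" using ek_pos by simp
  moreover have "0 \<le> ek k * real n" using ek_pos[of k] by simp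
  ultimately show ?thesis using n by simp
qed

lemma Q_range2: "x \<in> Q a k \<Longrightarrow> 1 + sk k \<le> x \<and> x \<le> 1 + 5/4 * sk k"
  using Q_range[of x a k] sig_le[of k] by auto

lemma GG_sub: "GG a \<subseteq> {1..2}"
proof
  fix x assume "x \<in> GG a"
  then obtain k where "x \<in> Q a k" unfolding GG_def by auto
  then show "x \<in> {1..2}" using Q_range2[of x a k] sk_le[of k] sk_pos[of k] by auto
qed



lemma count_bound:
  fixes x b :: real
  assumes b: "b > 0" and x: "x \<ge> 1" and n: "(2::real)^(n-1) \<le> 5*x"
  shows "real n \<le> (1 + 5 powr b/(b*ln 2)) * x powr b"
proof -
  have "(2::real)^(n-1) = 2 powr real (n-1)" by (simp add: powr_realpow)
  then have "(2 powr real (n-1)) powr b \<le> (5*x) powr b" using n b x by (intro powr_mono2) auto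
  moreover have "(2 powr real (n-1)) powr b = exp (real (n-1) * b * ln 2)"
    by (simp add: powr_powr powr_def mult.commute)
  moreover have "(5*x) powr b = 5 powr b * x powr b" using x by (subst powr_mult) auto
  moreover have "real (n-1) * b * ln 2 < exp (real (n-1) * b * ln 2)"
    using exp_ge_add_one_self[of "real (n-1) * b * ln 2"] by linarith
  ultimately have "real (n-1) * (b * ln 2) < 5 powr b * x powr b" by (simp add: mult.assoc)
  moreover have "b * ln 2 > 0" using b by simp
  ultimately have "real (n-1) \<le> 5 powr b * x powr b / (b * ln 2)" by (simp add: field_simps)
  moreover have "real n \<le> real (n-1) + 1" by linarith
  moreover have "1 \<le> x powr b" using x b by (intro ge_one_powr_ge_zero) auto
  ultimately show ?thesis by (simp add: field_simps)
qed

lemma sk_ratio: "k0 \<le> k1 \<Longrightarrow> sk k0 = 2^(k1-k0) * sk k1"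
proof -
  assume "k0 \<le> k1"
  then have "k1 + 1 = (k0+1) + (k1-k0)" by simp
  then have "sk k1 = sk k0 * (1/2)^(k1-k0)" unfolding sk_def by (metis power_add)
  moreover have "(2::real)^(k1-k0) * (1/2)^(k1-k0) = 1" by (simp add: power_one_over)
  ultimately show ?thesis by (metis mult.assoc mult.commute mult_1)
qed

lemma cardK_bound:
  assumes fin: "finite K" and uv: "d < v - u" "d > 0"
  and K: "\<And>k. k \<in> K \<Longrightarrow> d < 5/4 * sk k \<and> Q a k \<inter> {u..v} \<noteq> {}"
  shows "(2::real)^(card K - 1) \<le> 5 * ((v-u)/d)"
proof (cases "card K \<le> 1")
  case True
  then have "card K - 1 = 0" by simp
  moreover have "1 \<le> (v-u)/d" using uv by simp
  moreover have "1 \<le> 5 * ((v-u)/d)" using \<open>1 \<le> (v-u)/d\<close> by linarith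
  ultimately show ?thesis by (metis power_0)
next
  case False
  then have ne: "K \<noteq> {}" by auto
  define k0 where "k0 = Min K"
  define k1 where "k1 = Max K"
  have k0K: "k0 \<in> K" and k1K: "k1 \<in> K" unfolding k0_def k1_def using fin ne by auto
  have sub: "K \<subseteq> {k0..k1}" unfolding k0_def k1_def using fin by auto
  have "k0 \<noteq> k1"
  proof
    assume "k0 = k1" then have "K \<subseteq> {k0}" using sub by auto
    then have "card K \<le> 1" using card_mono[of "{k0}" K] by auto
    then show False using False by simp
  qed
  then have lt: "k0 < k1" using sub k1K unfolding k0_def using fin ne by (meson Min_le le_neq_implies_less)
  have "card K \<le> card {k0..k1}" using sub by (intro card_mono) auto
  then have cK: "card K - 1 \<le> k1 - k0" by simp
  obtain p0 where p0: "p0 \<in> Q a k0" "u \<le> p0" "p0 \<le> v" using K[OF k0K] by auto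
  obtain p1 where p1: "p1 \<in> Q a k1" "u \<le> p1" "p1 \<le> v" using K[OF k1K] by auto
  have r0: "1 + sk k0 \<le> p0" using Q_range2[OF p0(1)] by auto
  have r1: "p1 \<le> 1 + 5/4 * sk k1" using Q_range2[OF p1(1)] by auto
  have ratio: "sk k0 = 2^(k1-k0) * sk k1" using sk_ratio lt by simp
  have "(2::real)^1 \<le> 2^(k1-k0)" using lt by (intro power_increasing) auto
  then have "2 * sk k1 \<le> sk k0" using ratio sk_pos[of k1] by (simp add: mult_right_mono)
  then have "3/8 * sk k0 \<le> v - u" using r0 r1 p0 p1 by linarith
  moreover have "4/5 * d < sk k1" using K[OF k1K] by linarith
  moreover have "(2::real)^(k1-k0) * (4/5 * d) \<le> 2^(k1-k0) * sk k1"
    using \<open>4/5 * d < sk k1\<close> by (intro mult_left_mono) auto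
  then have "(2::real)^(k1-k0) * (4/5 * d) \<le> sk k0" using ratio by simp
  moreover have "sk k0 \<le> 8/3 * (v-u)" using \<open>3/8 * sk k0 \<le> v - u\<close> by (simp add: field_simps)
  ultimately have "(2::real)^(k1-k0) * (4/5 * d) \<le> 8/3 * (v-u)" by (meson order_trans)
  then have "(2::real)^(k1-k0) \<le> 10/3 * ((v-u)/d)" using uv by (simp add: field_simps)
  moreover have "(2::real)^(card K - 1) \<le> 2^(k1-k0)" using cK by (intro power_increasing) auto
  moreover have "0 \<le> (v-u)/d" using uv by simp
  ultimately show ?thesis by linarith
qed

lemma assouad_upper:
  assumes al: "0 \<le> \<alpha>" "\<alpha> \<le> 1" and a: "a > \<alpha>"
  shows "\<exists>c>0. \<forall>u v \<delta>. 1 \<le> u \<and> u < v \<and> v \<le> 2 \<and> 0 < \<delta> \<and> \<delta> < v - u \<longrightarrow>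
       real (cover_num (GG \<alpha> \<inter> {u..v}) \<delta>) \<le> c * \<delta> powr (-a) * (v - u) powr a"
proof -
  define b where "b = a - \<alpha>"
  have b: "b > 0" using a b_def by simp
  define C1 where "C1 = 1 + 5 powr b/(b*ln 2)"
  have C1: "C1 > 0" unfolding C1_def using b by (simp add: add_pos_nonneg)
  define c where "c = 1 + 32 * C1"
  have "c > 0" unfolding c_def using C1 by simp
  moreover have "real (cover_num (GG \<alpha> \<inter> {u..v}) d) \<le> c * d powr (-a) * (v - u) powr a"
    if uv: "1 \<le> u" "u < v" "v \<le> 2" "0 < d" "d < v - u" for u v d
  proof -
    define x where "x = (v-u)/d"
    have x1: "x > 1" unfolding x_def using uv by simp
    define K where "K = {k. d < 5/4 * sk k \<and> Q \<alpha> k \<inter> {u..v} \<noteq> {}}"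
    obtain N where N: "(1/2::real)^N < d" using real_arch_pow_inv[of d "1/2"] uv by auto
    have "K \<subseteq> {..<N}"
    proof
      fix k assume "k \<in> K"
      then have dk: "d < 5/4 * sk k" unfolding K_def by auto
      show "k \<in> {..<N}"
      proof (rule ccontr)
        assume "k \<notin> {..<N}"
        then have "(1/2::real)^k \<le> (1/2)^N" by (intro power_decreasing) auto
        moreover have "sk k = (1/2)^k / 2" unfolding sk_def by simp
        ultimately show False using dk N uv(4) by linarith
      qed
    qed
    then have finK: "finite K" using finite_subset by blast
    have "\<forall>k\<in>K. \<exists>S. cov (Q \<alpha> k \<inter> {u..v}) d S \<and> real (card S) \<le> 32 * x powr \<alpha>"
      unfolding Q_def x_def using piece_cov[OF al ek_pos uv(2,4,5)] by blast
    then obtain F where F: "\<And>k. k \<in> K \<Longrightarrow> cov (Q \<alpha> k \<inter> {u..v}) d (F k) \<and> real (card (F k)) \<le> 32 * x powr \<alpha>"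
      by metis
    define S where "S = insert 1 (\<Union>k\<in>K. F k)"
    have covS: "cov (GG \<alpha> \<inter> {u..v}) d S"
      unfolding cov_def
    proof (intro conjI subsetI)
      show "finite S" unfolding S_def using finK F unfolding cov_def by auto
      fix pt assume "pt \<in> GG \<alpha> \<inter> {u..v}"
      then obtain k where k: "pt \<in> Q \<alpha> k" "pt \<in> {u..v}" unfolding GG_def by auto
      show "pt \<in> (\<Union>x\<in>S. {x..x+d})"
      proof (cases "k \<in> K")
        case True
        have "Q \<alpha> k \<inter> {u..v} \<subseteq> (\<Union>x\<in>F k. {x..x+d})" using F[OF True] unfolding cov_def by blast
        then have "pt \<in> (\<Union>x\<in>F k. {x..x+d})" using k by blast
        then show ?thesis unfolding S_def using True by auto
      next
        case False
        then have "5/4 * sk k \<le> d" using k unfolding K_def by auto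
        then have "pt \<in> {1..1+d}" using Q_range2[OF k(1)] sk_pos[of k] by auto
        then show ?thesis unfolding S_def by auto
      qed
    qed
    have "card S \<le> 1 + card (\<Union>k\<in>K. F k)" unfolding S_def by (simp add: card_insert_le_m1 card_insert_if)
    also have "card (\<Union>k\<in>K. F k) \<le> (\<Sum>k\<in>K. card (F k))" by (rule card_UN_le[OF finK])
    finally have "card S \<le> 1 + (\<Sum>k\<in>K. card (F k))" by simp
    then have "real (card S) \<le> real (1 + (\<Sum>k\<in>K. card (F k)))" by (simp only: of_nat_le_iff)
    then have "real (card S) \<le> 1 + (\<Sum>k\<in>K. real (card (F k)))" by simp
    also have "(\<Sum>k\<in>K. real (card (F k))) \<le> (\<Sum>k\<in>K. 32 * x powr \<alpha>)" using F by (intro sum_mono) auto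
    also have "\<dots> = real (card K) * (32 * x powr \<alpha>)" by simp
    also have "real (card K) \<le> C1 * x powr b"
      unfolding C1_def using count_bound[OF b _ cardK_bound[OF finK uv(5,4)]] x1 unfolding K_def x_def by auto
    then have "real (card K) * (32 * x powr \<alpha>) \<le> C1 * x powr b * (32 * x powr \<alpha>)" by (intro mult_right_mono) auto
    also have "C1 * x powr b * (32 * x powr \<alpha>) = 32 * C1 * x powr a"
      unfolding b_def using x1 by (simp add: powr_add[symmetric] mult.commute mult.left_commute)
    finally have "real (card S) \<le> 1 + 32 * C1 * x powr a" by simp
    moreover have "1 \<le> x powr a" using x1 a al by (intro ge_one_powr_ge_zero) auto
    ultimately have "real (card S) \<le> c * x powr a" unfolding c_def by (simp add: algebra_simps)
    moreover have "real (cover_num (GG \<alpha> \<inter> {u..v}) d) \<le> real (card S)" using cover_num_le[OF covS] by simp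
    moreover have "c * d powr (-a) * (v - u) powr a = c * x powr a" unfolding x_def using uv by (intro powr_conv) auto
    ultimately show ?thesis by linarith
  qed
  ultimately show ?thesis by blast
qed



lemma Q_card: "card (Q a k) = card (T a 0 k)"
  unfolding Q_def P_def using ek_pos[of k] by (intro card_image) (auto simp: inj_on_def)

lemma Q_fin: "finite (Q a k)"
  unfolding Q_def P_def using T_fin by simp

lemma Q_sep: "x \<in> Q a k \<Longrightarrow> y \<in> Q a k \<Longrightarrow> x \<noteq> y \<Longrightarrow> ek k \<le> \<bar>x - y\<bar>"
proof -
  assume "x \<in> Q a k" "y \<in> Q a k" "x \<noteq> y"
  then obtain n n' where n: "x = 1 + sk k + ek k * real n" "y = 1 + sk k + ek k * real n'" "n \<noteq> n'"
    unfolding Q_def P_def by auto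
  then have "1 \<le> \<bar>real n - real n'\<bar>" by linarith
  then have "ek k * 1 \<le> ek k * \<bar>real n - real n'\<bar>" using ek_pos[of k] by (intro mult_left_mono) auto
  moreover have "\<bar>x - y\<bar> = ek k * \<bar>real n - real n'\<bar>" using n ek_pos[of k] by (simp add: abs_mult right_diff_distrib[symmetric])
  ultimately show ?thesis by simp
qed

lemma assouad_lower:
  assumes al: "0 \<le> \<alpha>" "\<alpha> \<le> 1" and a: "0 < a" "a < \<alpha>" and c: "c > 0"
  and H: "\<forall>u v \<delta>. 1 \<le> u \<and> u < v \<and> v \<le> 2 \<and> 0 < \<delta> \<and> \<delta> < v - u \<longrightarrow>
       real (cover_num (GG \<alpha> \<inter> {u..v}) \<delta>) \<le> c * \<delta> powr (-a) * (v - u) powr a"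
  shows False
proof -
  define b where "b = \<alpha> - a"
  have b: "b > 0" using a b_def by simp
  have l2: "ln 2 > (0::real)" by simp
  obtain k :: nat where k: "(ln c + (a+1) * ln 2) / (b * ln 2) < real k" using reals_Archimedean2 by blast
  have kb: "ln c + (a+1) * ln 2 < real k * b * ln 2" using k b l2 by (simp add: field_simps)
  define u where "u = 1 + sk k"
  define v where "v = u + ek k * 2^k"
  define d where "d = ek k / 2"
  have u1: "1 \<le> u" using sk_pos[of k] u_def by simp
  have v2: "v \<le> 2" using sig_le[of k] sk_le[of k] sk_pos[of k] unfolding v_def u_def by linarith
  have d0: "0 < d" using ek_pos[of k] d_def by simp
  have pk: "(1::real) \<le> 2^k" by simp
  have "ek k * 1 \<le> ek k * 2^k" using ek_pos[of k] pk by (intro mult_left_mono) auto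
  then have dv: "d < v - u" "u < v" using ek_pos[of k] unfolding d_def v_def by linarith+
  have Qsub: "Q \<alpha> k \<subseteq> GG \<alpha> \<inter> {u..v}"
  proof
    fix x assume "x \<in> Q \<alpha> k"
    then show "x \<in> GG \<alpha> \<inter> {u..v}" using Q_range[of x \<alpha> k] unfolding GG_def u_def v_def by auto
  qed
  obtain S0 where S0: "cov (GG \<alpha> \<inter> {u..v}) d S0" using cov_exists[of _ u v d] d0 by blast
  have "card (Q \<alpha> k) \<le> cover_num (GG \<alpha> \<inter> {u..v}) d"
  proof (rule cover_num_ge[OF S0])
    fix S assume "cov (GG \<alpha> \<inter> {u..v}) d S"
    then have "cov (Q \<alpha> k) d S" using Qsub cov_mono by blast
    moreover have "\<forall>x\<in>Q \<alpha> k. \<forall>y\<in>Q \<alpha> k. x \<noteq> y \<longrightarrow> d < \<bar>x - y\<bar>"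
      using Q_sep ek_pos[of k] unfolding d_def by fastforce
    ultimately show "card (Q \<alpha> k) \<le> card S" using sep_lower Q_fin by blast
  qed
  then have "real (card (Q \<alpha> k)) \<le> c * d powr (-a) * (v - u) powr a"
    using H u1 v2 d0 dv by (meson of_nat_le_iff order_trans)
  also have "\<dots> = c * ((v-u)/d) powr a" using d0 dv by (intro powr_conv) auto
  also have "(v-u)/d = 2 powr (real k + 1)" unfolding v_def d_def using ek_pos[of k]
    by (simp add: powr_add powr_realpow)
  also have "(2 powr (real k + 1)) powr a = 2 powr ((real k + 1) * a)" by (simp add: powr_powr)
  finally have ineq: "real (card (Q \<alpha> k)) \<le> c * 2 powr ((real k + 1) * a)" .
  define j where "j = nat \<lfloor>real k * \<alpha>\<rfloor>"
  have cQ: "card (Q \<alpha> k) = 2^j" unfolding j_def Q_card using T_card[OF al, of 0 k] by simp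
  have "real j \<ge> real k * \<alpha> - 1" unfolding j_def using al by linarith
  then have "2 powr (real k * \<alpha> - 1) \<le> 2 powr (real j)" by (intro powr_mono) auto
  also have "2 powr (real j) = real (card (Q \<alpha> k))" using cQ by (simp add: powr_realpow)
  finally have "2 powr (real k * \<alpha> - 1) \<le> c * 2 powr ((real k + 1) * a)" using ineq by linarith
  then have "ln (2 powr (real k * \<alpha> - 1)) \<le> ln (c * 2 powr ((real k + 1) * a))"
    using c by (subst ln_le_cancel_iff) auto
  also have "ln (c * 2 powr ((real k + 1) * a)) = ln c + (real k + 1) * a * ln 2"
    using c by (simp add: ln_mult ln_powr)
  finally have "(real k * \<alpha> - 1) * ln 2 \<le> ln c + (real k + 1) * a * ln 2" by (simp add: ln_powr)
  then have "real k * b * ln 2 \<le> ln c + (a+1) * ln 2" unfolding b_def by (simp add: algebra_simps)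
  then show False using kb by linarith
qed

lemma poly_exp:
  fixes L a :: real
  assumes "a > 0" "L \<ge> 0"
  shows "1 + (1+L)^2 \<le> (1 + 1/(min 1 (a * ln 2 / 2))^2) * exp (L * a * ln 2)"
proof -
  define \<beta> where "\<beta> = a * ln 2 / 2"
  define \<mu> where "\<mu> = min 1 \<beta>"
  have \<beta>: "\<beta> > 0" unfolding \<beta>_def using assms by simp
  have \<mu>: "\<mu> > 0" "\<mu> \<le> 1" "\<mu> \<le> \<beta>" unfolding \<mu>_def using \<beta> by auto
  have "\<mu> * (1 + L) \<le> 1 + \<beta> * L" using \<mu> assms
  proof -
    have "\<mu> * L \<le> \<beta> * L" using \<mu> assms by (intro mult_right_mono) auto
    then show ?thesis using \<mu> by (simp add: algebra_simps)
  qed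
  also have "\<dots> \<le> exp (\<beta> * L)" by (rule exp_ge_add_one_self)
  finally have h: "\<mu> * (1 + L) \<le> exp (\<beta> * L)" .
  have "(\<mu> * (1 + L))^2 \<le> (exp (\<beta> * L))^2" using h \<mu> assms by (intro power_mono) auto
  also have "(exp (\<beta> * L))^2 = exp (L * a * ln 2)" unfolding \<beta>_def
    by (simp add: power2_eq_square exp_add[symmetric])
  finally have "\<mu>^2 * (1+L)^2 \<le> exp (L * a * ln 2)" by (simp add: power_mult_distrib)
  then have A: "(1+L)^2 \<le> exp (L * a * ln 2) / \<mu>^2" using \<mu> by (simp add: field_simps)
  have B: "1 \<le> exp (L * a * ln 2)" using assms by simp
  have "1 + (1+L)^2 \<le> exp (L * a * ln 2) + exp (L * a * ln 2) / \<mu>^2" using A B by linarith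
  also have "\<dots> = (1 + 1/\<mu>^2) * exp (L * a * ln 2)" by (simp add: field_simps)
  finally show ?thesis unfolding \<mu>_def \<beta>_def .
qed

lemma mink_upper:
  assumes al: "0 \<le> \<alpha>" "\<alpha> \<le> 1" and a: "a > 0"
  shows "\<exists>c>0. \<forall>\<delta>. 0 < \<delta> \<and> \<delta> < 1 \<longrightarrow> real (cover_num (GG \<alpha>) \<delta>) \<le> c * \<delta> powr (-a)"
proof -
  define c where "c = 1 + 1/(min 1 (a * ln 2 / 2))^2"
  have "c > 0" unfolding c_def by (simp add: add_pos_nonneg)
  moreover have "real (cover_num (GG \<alpha>) d) \<le> c * d powr (-a)" if d: "0 < d" "d < 1" for d
  proof -
    define L where "L = log 2 (1/d)"
    have L0: "L > 0" unfolding L_def using d by simp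
    have L2: "2 powr L = 1/d" unfolding L_def using d by simp
    have lt: "real j < L" if "(2::real)^j < 1/d" for j :: nat
    proof -
      have "2 powr real j < 2 powr L" using that L2 by (simp add: powr_realpow)
      then show ?thesis by simp
    qed
    define K where "K = {k. d < 5/4 * sk k}"
    have Kl: "real k < L" if "k \<in> K" for k
    proof -
      have "d < 5/4 * sk k" using that K_def by simp
      moreover have "sk k = 1 / 2^k / 2" unfolding sk_def by (simp add: power_one_over)
      ultimately have "d * 2^k < 1" by (simp add: field_simps)
      then have "(2::real)^k < 1/d" using d by (simp add: field_simps)
      then show ?thesis by (rule lt)
    qed
    have Ksub: "K \<subseteq> {..<nat \<lceil>L\<rceil>}"
    proof
      fix k assume "k \<in> K"
      then have "of_int (int k) < L" using Kl by simp
      then have "int k < \<lceil>L\<rceil>" by (simp only: less_ceiling_iff)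
      then show "k \<in> {..<nat \<lceil>L\<rceil>}" by simp
    qed
    then have finK: "finite K" using finite_subset by blast
    have cK: "real (card K) \<le> L + 1"
    proof -
      have "card K \<le> nat \<lceil>L\<rceil>" using card_mono[OF _ Ksub] by simp
      then have "real (card K) \<le> real (nat \<lceil>L\<rceil>)" by simp
      also have "\<dots> \<le> L + 1" using L0 by linarith
      finally show ?thesis .
    qed
    define F where "F k = (if ek k * 2^k \<le> d then {1 + sk k} else Q \<alpha> k)" for k
    have F: "cov (Q \<alpha> k) d (F k) \<and> real (card (F k)) \<le> 1 + L" if "k \<in> K" for k
    proof (cases "ek k * 2^k \<le> d")
      case True
      have "cov (Q \<alpha> k) d {1 + sk k}" unfolding cov_def using Q_range[of _ \<alpha> k] True by fastforce
      then show ?thesis unfolding F_def using True L0 by simp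
    next
      case False
      have "cov (Q \<alpha> k) d (Q \<alpha> k)" unfolding cov_def using Q_fin d by fastforce
      moreover have "real (card (Q \<alpha> k)) \<le> L"
      proof -
        have "card (Q \<alpha> k) = 2 ^ nat \<lfloor>real k * \<alpha>\<rfloor>" unfolding Q_card using T_card[OF al, of 0 k] by simp
        also have "\<dots> \<le> 2^k"
        proof (intro power_increasing)
          have "real k * \<alpha> \<le> real k" using al by (simp add: mult_left_le)
          then show "nat \<lfloor>real k * \<alpha>\<rfloor> \<le> k" by linarith
        qed auto
        finally have "real (card (Q \<alpha> k)) \<le> real ((2::nat)^k)" by (simp only: of_nat_le_iff)
        then have c1: "real (card (Q \<alpha> k)) \<le> 2^k" by simp
        have "d < (1/2)^(2^(k+3))" using False sig_eq[of k] by simp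
        then have "(2::real)^(2^(k+3)) < 1/d" using d by (simp add: field_simps power_one_over)
        then have "real (2^(k+3)) < L" by (rule lt)
        then have h3: "(2::real)^(k+3) < L" by simp
        have h4: "(2::real)^k \<le> 2^(k+3)" by (intro power_increasing) auto
        show ?thesis using c1 h3 h4 by linarith
      qed
      ultimately show ?thesis unfolding F_def using False by simp
    qed
    define S where "S = insert 1 (\<Union>k\<in>K. F k)"
    have covS: "cov (GG \<alpha>) d S"
      unfolding cov_def
    proof (intro conjI subsetI)
      show "finite S" unfolding S_def using finK F unfolding cov_def by auto
      fix pt assume "pt \<in> GG \<alpha>"
      then obtain k where k: "pt \<in> Q \<alpha> k" unfolding GG_def by auto
      show "pt \<in> (\<Union>x\<in>S. {x..x+d})"
      proof (cases "k \<in> K")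
        case True
        have "Q \<alpha> k \<subseteq> (\<Union>x\<in>F k. {x..x+d})" using F[OF True] unfolding cov_def by blast
        then have "pt \<in> (\<Union>x\<in>F k. {x..x+d})" using k by blast
        then show ?thesis unfolding S_def using True by auto
      next
        case False
        then have "5/4 * sk k \<le> d" unfolding K_def by auto
        then have "pt \<in> {1..1+d}" using Q_range2[OF k] sk_pos[of k] by auto
        then show ?thesis unfolding S_def by auto
      qed
    qed
    have "card S \<le> 1 + card (\<Union>k\<in>K. F k)" unfolding S_def
      by (cases "finite (\<Union>k\<in>K. F k)") (simp_all add: card_insert_if)
    also have "card (\<Union>k\<in>K. F k) \<le> (\<Sum>k\<in>K. card (F k))" by (rule card_UN_le[OF finK])
    finally have "card S \<le> 1 + (\<Sum>k\<in>K. card (F k))" by simp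
    then have "real (card S) \<le> real (1 + (\<Sum>k\<in>K. card (F k)))" by (simp only: of_nat_le_iff)
    then have "real (card S) \<le> 1 + (\<Sum>k\<in>K. real (card (F k)))" by simp
    also have "(\<Sum>k\<in>K. real (card (F k))) \<le> (\<Sum>k\<in>K. 1 + L)" using F by (intro sum_mono) auto
    also have "\<dots> = real (card K) * (1 + L)" by simp
    also have "\<dots> \<le> (L + 1) * (1 + L)" using cK L0 by (intro mult_right_mono) auto
    finally have "real (card S) \<le> 1 + (1 + L)^2" by (simp add: power2_eq_square algebra_simps)
    also have "\<dots> \<le> c * exp (L * a * ln 2)" unfolding c_def using poly_exp[OF a] L0 by simp
    also have "exp (L * a * ln 2) = d powr (-a)"
    proof -
      have "d powr (-a) = (1/d) powr a" using d by (simp add: powr_minus_divide powr_divide)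
      also have "\<dots> = (2 powr L) powr a" using L2 by simp
      also have "\<dots> = exp (L * a * ln 2)" by (simp add: powr_powr powr_def mult.commute mult.left_commute)
      finally show ?thesis by simp
    qed
    finally have "real (card S) \<le> c * d powr (-a)" .
    moreover have "cover_num (GG \<alpha>) d \<le> card S" using cover_num_le[OF covS] .
    ultimately show ?thesis by (meson of_nat_le_iff order_trans)
  qed
  ultimately show ?thesis by blast
qed

theorem lemma6p2:
  fixes \<alpha> :: real
  assumes "0 \<le> \<alpha>" and "\<alpha> \<le> 1"
  shows "\<exists>G. G \<subseteq> {1..2} \<and> dim_M G = 0 \<and> dim_A G = \<alpha>"
proof (intro exI conjI)
  show "GG \<alpha> \<subseteq> {1..2}" by (rule GG_sub)
  show "dim_M (GG \<alpha>) = 0" unfolding dim_M_def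
    by (rule Inf_eq) (use mink_upper[OF assms] in auto)
  show "dim_A (GG \<alpha>) = \<alpha>" unfolding dim_A_def
  proof (rule Inf_eq)
    fix a assume "\<alpha> < a"
    then show "a \<in> {a. a > 0 \<and> (\<exists>c>0. \<forall>u v \<delta>. 1 \<le> u \<and> u < v \<and> v \<le> 2 \<and> 0 < \<delta> \<and> \<delta> < v - u \<longrightarrow>
       real (cover_num (GG \<alpha> \<inter> {u..v}) \<delta>) \<le> c * \<delta> powr (-a) * (v - u) powr a)}"
      using assouad_upper[OF assms] assms by auto
  next
    fix a assume "a \<in> {a. a > 0 \<and> (\<exists>c>0. \<forall>u v \<delta>. 1 \<le> u \<and> u < v \<and> v \<le> 2 \<and> 0 < \<delta> \<and> \<delta> < v - u \<longrightarrow>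
       real (cover_num (GG \<alpha> \<inter> {u..v}) \<delta>) \<le> c * \<delta> powr (-a) * (v - u) powr a)}"
    then obtain c where ac: "a > 0" "c > 0" and H: "\<forall>u v \<delta>. 1 \<le> u \<and> u < v \<and> v \<le> 2 \<and> 0 < \<delta> \<and> \<delta> < v - u \<longrightarrow>
       real (cover_num (GG \<alpha> \<inter> {u..v}) \<delta>) \<le> c * \<delta> powr (-a) * (v - u) powr a" by blast
    show "\<alpha> \<le> a"
    proof (rule ccontr)
      assume "\<not> \<alpha> \<le> a"
      then show False using assouad_lower[OF assms ac(1) _ ac(2) H] by simp
    qed
  qed
qed


end
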